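(* For every rooted tree $T$: $\mathcal{P}(T;1,1)$ is the number of maximal antichains of $T$; $\mathcal{P}(T;x,0)=x^{m}$ where $m$ is the number of leaves of $T$; $\mathcal{P}(T;0,1)$ is the number of maximal antichains of $T$ containing no leaves; $\mathcal{P}(T;2,1)$ is the number of antichains of $T$ (including the empty set); $\mathcal{P}(T;1,2)$ is the number of cutsets of $T$; $\mathcal{P}(T;2,2)=2^{|T|}$.
   Context: For a rooted tree $T$ with root $r$, the branches $T_1,\dots,T_k$ are the subtrees obtained by deleting $r$, each rooted at the neighbour of $r$ it contains; $|T|$ is the number of vertices. The polynomial $\mathcal{P}(T;x,y)$ is defined recursively by $\mathcal{P}(T;x,y)=x$ if $T$ has a single vertex, and otherwise $\mathcal{P}(T;x,y)=\prod_{i=1}^k\mathcal{P}(T_i;x,y)+y^{|T|-1}$. An antichain in $T$ is a set of vertices no two of which lie on a common path starting at the root; a maximal antichain is one not properly contained in another antichain. A leaf is a vertex with no children. A cutset (transversal) is a set of vertices meeting every path from the root to a leaf. *)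

theory Defs
  imports Main "HOL-Library.Sublist"
begin

text \<open>Rooted (ordered) trees as rose trees. The vertices of a tree are addressed
by lists of child indices; the root is the empty address.\<close>

datatype rtree = Node "rtree list"

function (sequential) verts :: "rtree \<Rightarrow> nat list set" where
  "verts (Node ts) = insert [] (\<Union>i<length ts. (Cons i) ` verts (ts ! i))"
  by pat_completeness auto
termination
  by (relation "measure size") (auto simp: less_Suc_eq_le intro!: size_list_estimation')

definition comparable :: "nat list \<Rightarrow> nat list \<Rightarrow> bool" where
  "comparable u v \<longleftrightarrow> prefix u v \<or> prefix v u"

definition antichain :: "rtree \<Rightarrow> nat list set \<Rightarrow> bool" where
  "antichain T A \<longleftrightarrow> A \<subseteq> verts T \<and> (\<forall>u\<in>A. \<forall>v\<in>A. u \<noteq> v \<longrightarrow> \<not> comparable u v)"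

definition maximal_antichain :: "rtree \<Rightarrow> nat list set \<Rightarrow> bool" where
  "maximal_antichain T A \<longleftrightarrow> antichain T A \<and> (\<forall>B. antichain T B \<and> A \<subseteq> B \<longrightarrow> B = A)"

definition is_leaf :: "rtree \<Rightarrow> nat list \<Rightarrow> bool" where
  "is_leaf T v \<longleftrightarrow> v \<in> verts T \<and> (\<forall>i. v @ [i] \<notin> verts T)"

definition leaves :: "rtree \<Rightarrow> nat list set" where
  "leaves T = {v. is_leaf T v}"

text \<open>A cutset meets every path from the root to a leaf; the vertices on the
root-to-leaf path ending in l are exactly the prefixes of l.\<close>
definition cutset :: "rtree \<Rightarrow> nat list set \<Rightarrow> bool" where
  "cutset T C \<longleftrightarrow> C \<subseteq> verts T \<and> (\<forall>l\<in>leaves T. \<exists>c\<in>C. prefix c l)"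

fun P :: "rtree \<Rightarrow> 'a::comm_semiring_1 \<Rightarrow> 'a \<Rightarrow> 'a" where
  "P (Node ts) x y =
     (if ts = [] then x
      else prod_list (map (\<lambda>t. P t x y) ts) + y ^ (card (verts (Node ts)) - 1))"

end

theory Submission
  imports Defs "HOL-Library.FuncSet"
begin

definition sub :: "nat \<Rightarrow> nat list set \<Rightarrow> nat list set" where
  "sub i S = {v. i # v \<in> S}"

lemma nil_in_verts: "[] \<in> verts T"
  by (cases T) simp

lemma Cons_in_verts: "i # v \<in> verts (Node ts) \<longleftrightarrow> i < length ts \<and> v \<in> verts (ts ! i)"
  by auto

lemma finite_verts: "finite (verts T)"
  by (induction T rule: rtree.induct) auto

lemma prod_list_nth: "prod_list (map f xs) = (\<Prod>i<length xs. f (xs ! i))"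
  by (induction xs) (simp_all add: prod.lessThan_Suc_shift del: prod.lessThan_Suc)

lemma P_Node: "ts \<noteq> [] \<Longrightarrow> P (Node ts) x y
   = (\<Prod>i<length ts. P (ts ! i) x y) + y ^ (card (verts (Node ts)) - 1)"
  by (simp del: verts.simps add: prod_list_nth)

lemma P_Nil: "P (Node []) x y = x"
  by simp

declare P.simps[simp del]

lemma count_split:
  fixes k :: nat and V :: "nat \<Rightarrow> nat list set"
  assumes "\<And>i A. i < k \<Longrightarrow> Q i A \<Longrightarrow> A \<subseteq> V i"
  shows "card {S. S \<subseteq> (\<Union>i<k. Cons i ` V i) \<and> (\<forall>i<k. Q i (sub i S))}
       = (\<Prod>i<k. card {A. Q i A})"
proof -
  let ?F = "\<lambda>f. \<Union>i<k. Cons i ` f i"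
  let ?D = "PiE {..<k} (\<lambda>i. {A. Q i A})"
  have subF: "sub i (?F f) = f i" if "i < k" for i f
    using that by (auto simp: sub_def)
  have eq: "{S. S \<subseteq> (\<Union>i<k. Cons i ` V i) \<and> (\<forall>i<k. Q i (sub i S))} = ?F ` ?D"
  proof (intro equalityI subsetI)
    fix S assume "S \<in> {S. S \<subseteq> (\<Union>i<k. Cons i ` V i) \<and> (\<forall>i<k. Q i (sub i S))}"
    then have S: "S \<subseteq> (\<Union>i<k. Cons i ` V i)" "\<forall>i<k. Q i (sub i S)" by auto
    define f where "f = (\<lambda>i. if i < k then sub i S else undefined)"
    have "f \<in> ?D" using S(2) by (auto simp: f_def)
    moreover have "S = ?F f"
    proof
      show "S \<subseteq> ?F f"
      proof
        fix s assume "s \<in> S"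
        with S(1) obtain i v where "i < k" "s = i # v" by auto
        with \<open>s \<in> S\<close> show "s \<in> ?F f" by (auto simp: f_def sub_def)
      qed
      show "?F f \<subseteq> S" by (auto simp: f_def sub_def)
    qed
    ultimately show "S \<in> ?F ` ?D" by blast
  next
    fix S assume "S \<in> ?F ` ?D"
    then obtain f where f: "f \<in> ?D" "S = ?F f" by blast
    have "S \<subseteq> (\<Union>i<k. Cons i ` V i)" using f assms by (fastforce simp: PiE_def Pi_def)
    moreover have "\<forall>i<k. Q i (sub i S)" using f subF by (auto simp: PiE_def Pi_def)
    ultimately show "S \<in> {S. S \<subseteq> (\<Union>i<k. Cons i ` V i) \<and> (\<forall>i<k. Q i (sub i S))}" by blast
  qed
  have inj: "inj_on ?F ?D"
  proof (rule inj_onI)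
    fix f g assume fg: "f \<in> ?D" "g \<in> ?D" "?F f = ?F g"
    show "f = g"
    proof
      fix i show "f i = g i"
      proof (cases "i < k")
        case True then show ?thesis using subF[of i f] subF[of i g] fg(3) by metis
      next
        case False then show ?thesis using fg(1,2) by (auto simp: PiE_def extensional_def)
      qed
    qed
  qed
  show ?thesis unfolding eq card_image[OF inj] by (simp add: card_PiE)
qed

lemma card_U:
  fixes k :: nat and W :: "nat \<Rightarrow> nat list set"
  assumes "\<And>i. i < k \<Longrightarrow> finite (W i)"
  shows "card (\<Union>i<k. Cons i ` W i) = (\<Sum>i<k. card (W i))"
proof -
  have "card (\<Union>i<k. Cons i ` W i) = (\<Sum>i<k. card (Cons i ` W i))"
    by (rule card_UN_disjoint) (use assms in auto)
  also have "\<dots> = (\<Sum>i<k. card (W i))"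
    by (rule sum.cong) (auto simp: card_image)
  finally show ?thesis .
qed

definition U :: "rtree list \<Rightarrow> nat list set" where
  "U ts = (\<Union>i<length ts. Cons i ` verts (ts ! i))"

lemma verts_U: "verts (Node ts) = insert [] (U ts)"
  by (simp add: U_def)

declare verts.simps[simp del]
declare nil_in_verts[simp]

lemma Nil_notin_U: "[] \<notin> U ts"
  by (auto simp: U_def)

lemma Cons_in_U: "i # v \<in> U ts \<longleftrightarrow> i < length ts \<and> v \<in> verts (ts ! i)"
  by (auto simp: U_def)

lemma finite_U: "finite (U ts)"
  using finite_verts[of "Node ts"] by (simp add: verts_U)

lemma comparable_Cons: "comparable (i # u) (j # v) \<longleftrightarrow> i = j \<and> comparable u v"
  by (auto simp: comparable_def)

lemma comparable_Nil: "comparable [] v" "comparable v []"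
  by (auto simp: comparable_def)

lemma sub_subset: "A \<subseteq> U ts \<Longrightarrow> i < length ts \<Longrightarrow> sub i A \<subseteq> verts (ts ! i)"
  by (auto simp: sub_def Cons_in_U)

lemma subset_U_elem: "A \<subseteq> U ts \<Longrightarrow> a \<in> A \<Longrightarrow> \<exists>i v. a = i # v \<and> i < length ts \<and> v \<in> sub i A"
  by (cases a) (auto simp: sub_def Nil_notin_U[of ts] Cons_in_U dest: subsetD)

lemma antichain_Node:
  "antichain (Node ts) A \<longleftrightarrow> A = {[]} \<or> (A \<subseteq> U ts \<and> (\<forall>i<length ts. antichain (ts ! i) (sub i A)))"
proof
  assume a: "antichain (Node ts) A"
  show "A = {[]} \<or> (A \<subseteq> U ts \<and> (\<forall>i<length ts. antichain (ts ! i) (sub i A)))"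
  proof (cases "[] \<in> A")
    case True
    then have "A = {[]}" using a comparable_Nil unfolding antichain_def by blast
    then show ?thesis by blast
  next
    case False
    then have AU: "A \<subseteq> U ts" using a by (auto simp: antichain_def verts_U)
    moreover have "\<forall>i<length ts. antichain (ts ! i) (sub i A)"
      using a AU sub_subset[OF AU] unfolding antichain_def sub_def
      by (metis (mono_tags, lifting) comparable_Cons list.inject mem_Collect_eq)
    ultimately show ?thesis by blast
  qed
next
  assume "A = {[]} \<or> (A \<subseteq> U ts \<and> (\<forall>i<length ts. antichain (ts ! i) (sub i A)))"
  then show "antichain (Node ts) A"
  proof
    assume "A = {[]}" then show ?thesis by (auto simp: antichain_def)
  next
    assume h: "A \<subseteq> U ts \<and> (\<forall>i<length ts. antichain (ts ! i) (sub i A))"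
    show ?thesis unfolding antichain_def
    proof (intro conjI ballI impI)
      show "A \<subseteq> verts (Node ts)" using h by (auto simp: verts_U)
    next
      fix u v assume uv: "u \<in> A" "v \<in> A" "u \<noteq> v"
      obtain i u' where u: "u = i # u'" "i < length ts" "u' \<in> sub i A" using subset_U_elem h uv by blast
      obtain j v' where v: "v = j # v'" "j < length ts" "v' \<in> sub j A" using subset_U_elem h uv by blast
      show "\<not> comparable u v"
      proof (cases "i = j")
        case True
        then show ?thesis using h u v uv unfolding antichain_def by (auto simp: comparable_Cons)
      next
        case False then show ?thesis using u v by (simp add: comparable_Cons)
      qed
    qed
  qed
qed

definition covers :: "rtree \<Rightarrow> nat list set \<Rightarrow> bool" where
  "covers T A \<longleftrightarrow> (\<forall>v\<in>verts T. \<exists>a\<in>A. comparable a v)"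

lemma comparable_sym: "comparable u v \<Longrightarrow> comparable v u"
  by (auto simp: comparable_def)

lemma comparable_refl: "comparable u u"
  by (auto simp: comparable_def)

lemma max_iff: "maximal_antichain T A \<longleftrightarrow> antichain T A \<and> covers T A"
proof
  assume m: "maximal_antichain T A"
  then have a: "antichain T A" by (simp add: maximal_antichain_def)
  moreover have "covers T A" unfolding covers_def
  proof
    fix v assume v: "v \<in> verts T"
    show "\<exists>a\<in>A. comparable a v"
    proof (rule ccontr)
      assume n: "\<not> (\<exists>a\<in>A. comparable a v)"
      have "antichain T (insert v A)" using a v n unfolding antichain_def comparable_def by auto
      moreover have "\<forall>B. antichain T B \<and> A \<subseteq> B \<longrightarrow> B = A" using m by (simp add: maximal_antichain_def)
      ultimately have "insert v A = A" by (metis subset_insertI)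
      then show False using n comparable_refl by blast
    qed
  qed
  ultimately show "antichain T A \<and> covers T A" by blast
next
  assume h: "antichain T A \<and> covers T A"
  show "maximal_antichain T A" unfolding maximal_antichain_def
  proof (intro conjI allI impI)
    show "antichain T A" using h by blast
  next
    fix B assume B: "antichain T B \<and> A \<subseteq> B"
    show "B = A"
    proof
      show "B \<subseteq> A"
      proof
        fix b assume b: "b \<in> B"
        then have "b \<in> verts T" using B by (auto simp: antichain_def)
        then obtain a where "a \<in> A" "comparable a b" using h by (auto simp: covers_def)
        moreover have "\<forall>u\<in>B. \<forall>v\<in>B. u \<noteq> v \<longrightarrow> \<not> comparable u v" using B by (simp add: antichain_def)
        ultimately show "b \<in> A" using B b by (metis subsetD)
      qed
    qed (use B in blast)
  qed
qed

lemma covers_Node: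
  assumes ne: "ts \<noteq> []" and AU: "A \<subseteq> U ts"
  shows "covers (Node ts) A \<longleftrightarrow> (\<forall>i<length ts. covers (ts ! i) (sub i A))"
proof
  assume c: "covers (Node ts) A"
  show "\<forall>i<length ts. covers (ts ! i) (sub i A)"
  proof (intro allI impI)
    fix i assume i: "i < length ts"
    show "covers (ts ! i) (sub i A)" unfolding covers_def
    proof
      fix v assume "v \<in> verts (ts ! i)"
      then have "i # v \<in> verts (Node ts)" using i by (simp add: verts_U Cons_in_U)
      then obtain a where a: "a \<in> A" "comparable a (i # v)" using c by (auto simp: covers_def)
      then obtain j a' where "a = j # a'" "a' \<in> sub j A" using subset_U_elem[OF AU] by blast
      then show "\<exists>a\<in>sub i A. comparable a v" using a by (auto simp: comparable_Cons)
    qed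
  qed
next
  assume c: "\<forall>i<length ts. covers (ts ! i) (sub i A)"
  show "covers (Node ts) A" unfolding covers_def
  proof
    fix v assume v: "v \<in> verts (Node ts)"
    show "\<exists>a\<in>A. comparable a v"
    proof (cases v)
      case Nil
      have "covers (ts ! 0) (sub 0 A)" using c ne by simp
      then obtain a where "a \<in> sub 0 A" unfolding covers_def using nil_in_verts by blast
      then show ?thesis using Nil by (auto simp: sub_def comparable_Nil)
    next
      case (Cons i v')
      then have i: "i < length ts" "v' \<in> verts (ts ! i)" using v by (auto simp: verts_U Cons_in_U)
      then obtain a where "a \<in> sub i A" "comparable a v'" using c by (auto simp: covers_def)
      then have "i # a \<in> A" "comparable (i # a) v" using Cons by (auto simp: sub_def comparable_Cons)
      then show ?thesis by blast
    qed
  qed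
qed

lemma maximal_Node:
  assumes ne: "ts \<noteq> []"
  shows "maximal_antichain (Node ts) A \<longleftrightarrow>
     A = {[]} \<or> (A \<subseteq> U ts \<and> (\<forall>i<length ts. maximal_antichain (ts ! i) (sub i A)))"
proof -
  have c0: "covers (Node ts) {[]}" by (auto simp: covers_def comparable_Nil)
  show ?thesis
  proof (cases "A \<subseteq> U ts")
    case True
    then have "A \<noteq> {[]}" using Nil_notin_U by blast
    then show ?thesis using True covers_Node[OF ne True]
      by (auto simp: max_iff antichain_Node)
  next
    case False
    then show ?thesis using c0 by (auto simp: max_iff antichain_Node)
  qed
qed

lemma is_leaf_Cons: "is_leaf (Node ts) (i # v) \<longleftrightarrow> i < length ts \<and> is_leaf (ts ! i) v"
  unfolding is_leaf_def append_Cons Cons_in_verts by blast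

lemma leaves_Nil: "leaves (Node []) = {[]}"
  unfolding leaves_def is_leaf_def verts_U U_def by auto

lemma leaves_Node:
  assumes ne: "ts \<noteq> []"
  shows "leaves (Node ts) = (\<Union>i<length ts. Cons i ` leaves (ts ! i))"
proof -
  have "[0] \<in> verts (Node ts)" using ne by (simp add: verts_U Cons_in_U)
  then have "\<not> is_leaf (Node ts) []"
    unfolding is_leaf_def by (metis append_Nil)
  then show ?thesis
    apply (auto simp: leaves_def is_leaf_Cons)
    apply (case_tac x)
     apply (auto simp: is_leaf_Cons)
    done
qed

lemma leaves_subset: "leaves T \<subseteq> verts T"
  by (auto simp: leaves_def is_leaf_def)

lemma finite_leaves: "finite (leaves T)"
  using finite_subset[OF leaves_subset finite_verts] .

lemma noleaf_Node:
  assumes ne: "ts \<noteq> []"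
  shows "(maximal_antichain (Node ts) A \<and> A \<inter> leaves (Node ts) = {}) \<longleftrightarrow>
     A = {[]} \<or> (A \<subseteq> U ts \<and> (\<forall>i<length ts. maximal_antichain (ts ! i) (sub i A)
        \<and> sub i A \<inter> leaves (ts ! i) = {}))"
proof -
  have l0: "{[]} \<inter> leaves (Node ts) = {}" using ne by (auto simp: leaves_Node)
  have eq: "A \<subseteq> U ts \<Longrightarrow> A \<inter> leaves (Node ts) = {} \<longleftrightarrow> (\<forall>i<length ts. sub i A \<inter> leaves (ts ! i) = {})"
  proof -
    assume AU: "A \<subseteq> U ts"
    show ?thesis
    proof
      assume "A \<inter> leaves (Node ts) = {}"
      then show "\<forall>i<length ts. sub i A \<inter> leaves (ts ! i) = {}"
        using ne by (auto simp: leaves_Node sub_def)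
    next
      assume h: "\<forall>i<length ts. sub i A \<inter> leaves (ts ! i) = {}"
      show "A \<inter> leaves (Node ts) = {}"
      proof (rule ccontr)
        assume "A \<inter> leaves (Node ts) \<noteq> {}"
        then obtain i v where "i < length ts" "i # v \<in> A" "v \<in> leaves (ts ! i)"
          using ne by (auto simp: leaves_Node)
        then show False using h by (auto simp: sub_def)
      qed
    qed
  qed
  show ?thesis using eq l0 by (auto simp: maximal_Node[OF ne])
qed

lemma cutset_Node:
  assumes ne: "ts \<noteq> []"
  shows "cutset (Node ts) C \<longleftrightarrow> ([] \<in> C \<and> C \<subseteq> verts (Node ts))
     \<or> (C \<subseteq> U ts \<and> (\<forall>i<length ts. cutset (ts ! i) (sub i C)))"
proof
  assume c: "cutset (Node ts) C"
  show "([] \<in> C \<and> C \<subseteq> verts (Node ts)) \<or> (C \<subseteq> U ts \<and> (\<forall>i<length ts. cutset (ts ! i) (sub i C)))"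
  proof (cases "[] \<in> C")
    case True then show ?thesis using c by (simp add: cutset_def)
  next
    case False
    then have CU: "C \<subseteq> U ts" using c by (auto simp: cutset_def verts_U)
    have "cutset (ts ! i) (sub i C)" if i: "i < length ts" for i
      unfolding cutset_def
    proof
      show "sub i C \<subseteq> verts (ts ! i)" using sub_subset[OF CU i] .
      show "\<forall>l\<in>leaves (ts ! i). \<exists>c\<in>sub i C. prefix c l"
      proof
        fix l assume "l \<in> leaves (ts ! i)"
        then have "i # l \<in> leaves (Node ts)" using i ne by (auto simp: leaves_Node)
        then obtain c where c: "c \<in> C" "prefix c (i # l)" using c by (auto simp: cutset_def)
        then obtain j c' where "c = j # c'" "c' \<in> sub j C" using subset_U_elem[OF CU] by blast
        then show "\<exists>c\<in>sub i C. prefix c l" using c by auto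
      qed
    qed
    then show ?thesis using CU by blast
  qed
next
  assume h: "([] \<in> C \<and> C \<subseteq> verts (Node ts)) \<or> (C \<subseteq> U ts \<and> (\<forall>i<length ts. cutset (ts ! i) (sub i C)))"
  then show "cutset (Node ts) C"
  proof
    assume "[] \<in> C \<and> C \<subseteq> verts (Node ts)"
    then show ?thesis unfolding cutset_def using Nil_prefix by blast
  next
    assume h: "C \<subseteq> U ts \<and> (\<forall>i<length ts. cutset (ts ! i) (sub i C))"
    show ?thesis unfolding cutset_def
    proof
      show "C \<subseteq> verts (Node ts)" using h by (auto simp: verts_U)
      show "\<forall>l\<in>leaves (Node ts). \<exists>c\<in>C. prefix c l"
      proof
        fix l assume "l \<in> leaves (Node ts)"
        then obtain i l' where l: "i < length ts" "l = i # l'" "l' \<in> leaves (ts ! i)"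
          using ne by (auto simp: leaves_Node)
        have "cutset (ts ! i) (sub i C)" using h l(1) by blast
        then obtain c where "c \<in> sub i C" "prefix c l'" using l(3) unfolding cutset_def by blast
        then have "i # c \<in> C" "prefix (i # c) l" using l by (auto simp: sub_def)
        then show "\<exists>c\<in>C. prefix c l" by blast
      qed
    qed
  qed
qed

lemma card_insert_split:
  "finite {A. R A} \<Longrightarrow> \<not> R X \<Longrightarrow> card {A. A = X \<or> R A} = Suc (card {A. R A})"
proof -
  assume f: "finite {A. R A}" and n: "\<not> R X"
  have "{A. A = X \<or> R A} = insert X {A. R A}" by blast
  then show ?thesis using f n by simp
qed

lemma finite_R: "finite {A. A \<subseteq> U ts \<and> Q A}"
  by (rule finite_subset[of _ "Pow (U ts)"]) (auto simp: finite_U)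

lemma card_verts_Node: "card (verts (Node ts)) = Suc (\<Sum>i<length ts. card (verts (ts ! i)))"
proof -
  have "card (verts (Node ts)) = Suc (card (U ts))" by (simp add: verts_U finite_U Nil_notin_U)
  then show ?thesis by (simp add: U_def card_U finite_verts)
qed


lemma IH_prod:
  assumes "\<And>t. t \<in> set ts \<Longrightarrow> f t = g t"
  shows "(\<Prod>i<length ts. f (ts ! i)) = (\<Prod>i<length ts. g (ts ! i))"
  by (rule prod.cong) (auto intro: assms)

lemma card_leaves_Node:
  "ts \<noteq> [] \<Longrightarrow> card (leaves (Node ts)) = (\<Sum>i<length ts. card (leaves (ts ! i)))"
  by (simp add: leaves_Node card_U finite_leaves)

lemma sum_verts_pos: "ts \<noteq> [] \<Longrightarrow> (\<Sum>i<length ts. card (verts (ts ! i))) \<noteq> 0"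
proof -
  assume "ts \<noteq> []"
  then have "0 \<in> {..<length ts}" by simp
  moreover have "card (verts (ts ! 0)) \<noteq> 0" using finite_verts nil_in_verts by (metis card_0_eq empty_iff)
  moreover have "card (verts (ts ! 0)) \<le> (\<Sum>i<length ts. card (verts (ts ! i)))"
    by (rule member_le_sum) (use \<open>0 \<in> {..<length ts}\<close> in auto)
  ultimately show ?thesis by linarith
qed

lemma count_antichain: "P T (2::int) 1 = int (card {A. antichain T A})"
proof (induction T rule: rtree.induct)
  case (Node ts)
  show ?case
  proof (cases "ts = []")
    case True
    have "{A. antichain (Node ts) A} = Pow {[]}"
      using True by (auto simp: antichain_def verts_U U_def)
    then show ?thesis using True by (simp add: card_Pow P_Nil)
  next
    case False
    let ?R = "\<lambda>A. A \<subseteq> U ts \<and> (\<forall>i<length ts. antichain (ts ! i) (sub i A))"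
    have "{A. antichain (Node ts) A} = {A. A = {[]} \<or> ?R A}" by (simp add: antichain_Node)
    then have "card {A. antichain (Node ts) A} = Suc (card {A. ?R A})"
      using card_insert_split[OF finite_R, of "{[]}"] Nil_notin_U by auto
    moreover have "card {A. ?R A} = (\<Prod>i<length ts. card {A. antichain (ts ! i) A})"
      unfolding U_def
      by (rule count_split[where k="length ts" and V="\<lambda>i. verts (ts ! i)"
            and Q="\<lambda>i A. antichain (ts ! i) A"]) (auto simp: antichain_def)
    moreover have "(\<Prod>i<length ts. P (ts ! i) (2::int) 1) = (\<Prod>i<length ts. int (card {A. antichain (ts ! i) A}))"
      by (rule IH_prod) (rule Node.IH)
    moreover have "P (Node ts) x 1 = (\<Prod>i<length ts. P (ts ! i) x 1) + 1" for x :: int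
      using P_Node[OF False, of x 1] by simp
    ultimately show ?thesis by (simp add: of_nat_prod)
  qed
qed

lemma count_maximal: "P T (1::int) 1 = int (card {A. maximal_antichain T A})"
proof (induction T rule: rtree.induct)
  case (Node ts)
  show ?case
  proof (cases "ts = []")
    case True
    have "{A. maximal_antichain (Node ts) A} = {{[]}}"
      using True by (auto simp: max_iff covers_def antichain_def verts_U U_def comparable_Nil)
    then show ?thesis using True by (simp add: P_Nil)
  next
    case False
    let ?R = "\<lambda>A. A \<subseteq> U ts \<and> (\<forall>i<length ts. maximal_antichain (ts ! i) (sub i A))"
    have "{A. maximal_antichain (Node ts) A} = {A. A = {[]} \<or> ?R A}" by (simp add: maximal_Node[OF False])
    then have "card {A. maximal_antichain (Node ts) A} = Suc (card {A. ?R A})"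
      using card_insert_split[OF finite_R, of "{[]}"] Nil_notin_U by auto
    moreover have "card {A. ?R A} = (\<Prod>i<length ts. card {A. maximal_antichain (ts ! i) A})"
      unfolding U_def
      by (rule count_split[where k="length ts" and V="\<lambda>i. verts (ts ! i)"
            and Q="\<lambda>i A. maximal_antichain (ts ! i) A"]) (auto simp: maximal_antichain_def antichain_def)
    moreover have "(\<Prod>i<length ts. P (ts ! i) (1::int) 1) = (\<Prod>i<length ts. int (card {A. maximal_antichain (ts ! i) A}))"
      by (rule IH_prod) (rule Node.IH)
    moreover have "P (Node ts) x 1 = (\<Prod>i<length ts. P (ts ! i) x 1) + 1" for x :: int
      using P_Node[OF False, of x 1] by simp
    ultimately show ?thesis by (simp add: of_nat_prod)
  qed
qed

lemma count_noleaf: "P T (0::int) 1 = int (card {A. maximal_antichain T A \<and> A \<inter> leaves T = {}})"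
proof (induction T rule: rtree.induct)
  case (Node ts)
  show ?case
  proof (cases "ts = []")
    case True
    have "{A. maximal_antichain (Node ts) A} = {{[]}}"
      using True by (auto simp: max_iff covers_def antichain_def verts_U U_def comparable_Nil)
    then have E: "{A. maximal_antichain (Node ts) A \<and> A \<inter> leaves (Node ts) = {}} = {}"
      using True by (auto simp: leaves_Nil)
    show ?thesis unfolding E using True by (simp add: P_Nil)
  next
    case False
    let ?R = "\<lambda>A. A \<subseteq> U ts \<and> (\<forall>i<length ts. maximal_antichain (ts ! i) (sub i A)
        \<and> sub i A \<inter> leaves (ts ! i) = {})"
    have "{A. maximal_antichain (Node ts) A \<and> A \<inter> leaves (Node ts) = {}} = {A. A = {[]} \<or> ?R A}"
      by (simp only: noleaf_Node[OF False])
    then have "card {A. maximal_antichain (Node ts) A \<and> A \<inter> leaves (Node ts) = {}} = Suc (card {A. ?R A})"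
      using card_insert_split[OF finite_R, of "{[]}"] Nil_notin_U by auto
    moreover have "card {A. ?R A} = (\<Prod>i<length ts. card {A. maximal_antichain (ts ! i) A \<and> A \<inter> leaves (ts ! i) = {}})"
      unfolding U_def
      by (rule count_split[where k="length ts" and V="\<lambda>i. verts (ts ! i)"
            and Q="\<lambda>i A. maximal_antichain (ts ! i) A \<and> A \<inter> leaves (ts ! i) = {}"])
        (auto simp: maximal_antichain_def antichain_def)
    moreover have "(\<Prod>i<length ts. P (ts ! i) (0::int) 1) = (\<Prod>i<length ts. int (card {A. maximal_antichain (ts ! i) A \<and> A \<inter> leaves (ts ! i) = {}}))"
      by (rule IH_prod) (rule Node.IH)
    moreover have "P (Node ts) x 1 = (\<Prod>i<length ts. P (ts ! i) x 1) + 1" for x :: int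
      using P_Node[OF False, of x 1] by simp
    ultimately show ?thesis by (simp add: of_nat_prod)
  qed
qed

lemma count_cutset: "P T (1::int) 2 = int (card {C. cutset T C})"
proof (induction T rule: rtree.induct)
  case (Node ts)
  show ?case
  proof (cases "ts = []")
    case True
    have "{C. cutset (Node ts) C} = {{[]}}"
      using True by (auto simp: cutset_def leaves_Nil verts_U U_def)
    then show ?thesis using True by (simp add: P_Nil)
  next
    case False
    let ?R = "\<lambda>C. C \<subseteq> U ts \<and> (\<forall>i<length ts. cutset (ts ! i) (sub i C))"
    let ?S = "{C. [] \<in> C \<and> C \<subseteq> verts (Node ts)}"
    have split: "{C. cutset (Node ts) C} = ?S \<union> {C. ?R C}"
      by (auto simp: cutset_Node[OF False])
    have disj: "?S \<inter> {C. ?R C} = {}" using Nil_notin_U by auto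
    have finS: "finite ?S" by (rule finite_subset[of _ "Pow (verts (Node ts))"]) (auto simp: finite_verts)
    have S_eq: "?S = insert [] ` Pow (U ts)" 
    proof
      show "?S \<subseteq> insert [] ` Pow (U ts)"
      proof
        fix C assume C: "C \<in> ?S"
        then have "C = insert [] (C - {[]})" "C - {[]} \<in> Pow (U ts)" by (auto simp: verts_U)
        then show "C \<in> insert [] ` Pow (U ts)" by blast
      qed
      show "insert [] ` Pow (U ts) \<subseteq> ?S" by (auto simp: verts_U)
    qed
    have inj: "inj_on (insert []) (Pow (U ts))"
      using Nil_notin_U unfolding inj_on_def by (metis PowD insert_ident subsetD)
    have cS: "card ?S = 2 ^ (\<Sum>i<length ts. card (verts (ts ! i)))"
      unfolding S_eq card_image[OF inj] by (simp add: card_Pow finite_U U_def card_U finite_verts)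
    have "card {C. cutset (Node ts) C} = card ?S + card {C. ?R C}"
      unfolding split by (rule card_Un_disjoint[OF finS finite_R disj])
    moreover have "card {C. ?R C} = (\<Prod>i<length ts. card {C. cutset (ts ! i) C})"
      unfolding U_def
      by (rule count_split[where k="length ts" and V="\<lambda>i. verts (ts ! i)"
            and Q="\<lambda>i A. cutset (ts ! i) A"]) (auto simp: cutset_def)
    moreover have "(\<Prod>i<length ts. P (ts ! i) (1::int) 2) = (\<Prod>i<length ts. int (card {C. cutset (ts ! i) C}))"
      by (rule IH_prod) (rule Node.IH)
    moreover have "P (Node ts) (1::int) 2 = (\<Prod>i<length ts. P (ts ! i) 1 2) + 2 ^ (\<Sum>i<length ts. card (verts (ts ! i)))"
      using P_Node[OF False, of "1::int" 2] by (simp only: card_verts_Node diff_Suc_1)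
    ultimately show ?thesis using cS by (simp add: of_nat_prod)
  qed
qed

lemma count_leaves: "P T (x::'a::comm_ring_1) 0 = x ^ card (leaves T)"
proof (induction T rule: rtree.induct)
  case (Node ts)
  show ?case
  proof (cases "ts = []")
    case True
    then show ?thesis by (simp add: leaves_Nil P_Nil)
  next
    case False
    have "(\<Prod>i<length ts. P (ts ! i) x 0) = (\<Prod>i<length ts. x ^ card (leaves (ts ! i)))"
      by (rule IH_prod) (rule Node.IH)
    moreover have "x ^ card (leaves (Node ts)) = (\<Prod>i<length ts. x ^ card (leaves (ts ! i)))"
      using False by (simp add: card_leaves_Node power_sum)
    moreover have "(0::'a) ^ (\<Sum>i<length ts. card (verts (ts ! i))) = 0"
      by (rule zero_power) (use sum_verts_pos[OF False] in linarith)
    ultimately show ?thesis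
      unfolding P_Node[OF False] card_verts_Node diff_Suc_1 by (simp only: add_0_right)
  qed
qed

lemma count_all: "P T (2::int) 2 = 2 ^ card (verts T)"
proof (induction T rule: rtree.induct)
  case (Node ts)
  show ?case
  proof (cases "ts = []")
    case True
    then show ?thesis by (simp add: verts_U U_def P_Nil)
  next
    case False
    have "(\<Prod>i<length ts. P (ts ! i) (2::int) 2) = (\<Prod>i<length ts. 2 ^ card (verts (ts ! i)))"
      by (rule IH_prod) (rule Node.IH)
    moreover have "P (Node ts) (2::int) 2 = (\<Prod>i<length ts. P (ts ! i) 2 2) + 2 ^ (\<Sum>i<length ts. card (verts (ts ! i)))"
      using P_Node[OF False, of "2::int" 2] by (simp only: card_verts_Node diff_Suc_1)
    moreover have "(\<Prod>i<length ts. (2::int) ^ card (verts (ts ! i))) = 2 ^ (\<Sum>i<length ts. card (verts (ts ! i)))"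
      by (simp only: power_sum)
    ultimately show ?thesis by (simp only: card_verts_Node power_Suc mult_2)
  qed
qed

theorem proposition2p11:
  fixes T :: rtree
  shows "P T (1::int) 1 = int (card {A. maximal_antichain T A})
    \<and> (\<forall>x :: 'a :: comm_ring_1. P T x 0 = x ^ card (leaves T))
    \<and> P T (0::int) 1 = int (card {A. maximal_antichain T A \<and> A \<inter> leaves T = {}})
    \<and> P T (2::int) 1 = int (card {A. antichain T A})
    \<and> P T (1::int) 2 = int (card {C. cutset T C})
    \<and> P T (2::int) 2 = 2 ^ card (verts T)"
  using count_maximal count_leaves count_noleaf count_antichain count_cutset count_all by blast

end
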